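(* With the notation and hypotheses of the uniform case (continuous $V_a$ with $0<V_a^{min}\le V_a\le V_a^{max}$, $\hat V_a=V_a/V_a^*$, delays $\tau_{min}(t),\tau_{max}(t)$ defined by $\mathcal{T}\mp V_a^*\delta=\int_{t-\tau_{min/max}(t)}^tV_a(s)ds$, and $A_U(t)=\frac1{2\delta}\int_{\tau_{min}(t)}^{\tau_{max}(t)}\frac{\beta x(t-\phi)}{\hat V_a(t-\phi)}e^{-\int_{t-\phi}^t\mu(x(s))ds}d\phi$), consider the uniformly distributed DDE $$\frac{d}{dt}x(t)=F(x(t),A_U(t)V_a(t))-\gamma(x(t))x(t),\quad t>t_0;\qquad x(s)=\rho(s),\ s\le t_0, \tag{U}$$ and the two-delay system $$\frac{d}{dt}x(t)=F(x(t),y(t)V_a(t))-\gamma(x(t))x(t),$$ $$\frac{d}{dt}y(t)=\frac1{2\delta}\Big[\frac{\beta x(t-\tau_{min}(t))}{\hat V_a(t-\tau_{min}(t))}e^{-\int_{t-\tau_{min}(t)}^t\mu(x(s))ds}\frac{V_a(t)}{V_a(t-\tau_{min}(t))}-\frac{\beta x(t-\tau_{max}(t))}{\hat V_a(t-\tau_{max}(t))}e^{-\int_{t-\tau_{max}(t)}^t\mu(x(s))ds}\frac{V_a(t)}{V_a(t-\tau_{max}(t))}\Big]-\mu(x(t))y(t). \tag{D}$$ (i) If $x$ solves (U) with history $\rho$, then $(x,y)$ with $y=A_U$ solves (D) with history $x(s)=\rho(s)$ and initial value $y(t_0)=\frac1{2\delta}\int_{\tau_{min}(t_0)}^{\tau_{max}(t_0)}\frac{\beta\rho(t_0-\phi)}{\hat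 V_a(t_0-\phi)}e^{-\int_{t_0-\phi}^{t_0}\mu(\rho(s))ds}d\phi$. (ii) A solution $(x,y)$ of (D) with history $x(s)=\eta(s)$, $s\le t_0$, gives a solution $x$ of (U) with history $\eta$ (with $y=A_U$) if and only if $y(t_0)=\frac1{2\delta}\int_{\tau_{min}(t_0)}^{\tau_{max}(t_0)}\frac{\beta\eta(t_0-\phi)}{\hat V_a(t_0-\phi)}e^{-\int_{t_0-\phi}^{t_0}\mu(\eta(s))ds}d\phi$.
   Context: $F$ is the influx function, $\gamma$ the clearance rate, $\mu$ the immature death rate, $\beta>0$, $\delta>0$, $\mathcal{T}>V_a^*\delta$ the mean maturation age. *)

theory Defs
  imports "HOL-Analysis.Analysis"
begin

definition hatV :: "(real \<Rightarrow> real) \<Rightarrow> real \<Rightarrow> real \<Rightarrow> real" where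
  "hatV Va Vs t = Va t / Vs"

definition AU :: "real \<Rightarrow> real \<Rightarrow> real \<Rightarrow> (real \<Rightarrow> real) \<Rightarrow> (real \<Rightarrow> real)
   \<Rightarrow> (real \<Rightarrow> real) \<Rightarrow> (real \<Rightarrow> real) \<Rightarrow> (real \<Rightarrow> real) \<Rightarrow> real \<Rightarrow> real" where
  "AU \<beta> \<delta> Vs Va \<mu> tmin tmax x t =
     (1 / (2 * \<delta>)) * integral {tmin t .. tmax t}
       (\<lambda>\<phi>. \<beta> * x (t - \<phi>) / hatV Va Vs (t - \<phi>)
              * exp (- integral {t - \<phi> .. t} (\<lambda>s. \<mu> (x s))))"

definition solves_U :: "(real \<Rightarrow> real \<Rightarrow> real) \<Rightarrow> (real \<Rightarrow> real) \<Rightarrow> (real \<Rightarrow> real)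
   \<Rightarrow> real \<Rightarrow> real \<Rightarrow> real \<Rightarrow> (real \<Rightarrow> real) \<Rightarrow> (real \<Rightarrow> real) \<Rightarrow> (real \<Rightarrow> real)
   \<Rightarrow> real \<Rightarrow> (real \<Rightarrow> real) \<Rightarrow> (real \<Rightarrow> real) \<Rightarrow> bool" where
  "solves_U F \<gamma> \<mu> \<beta> \<delta> Vs Va tmin tmax t0 \<rho> x \<longleftrightarrow>
     continuous_on UNIV x \<and>
     (\<forall>s\<le>t0. x s = \<rho> s) \<and>
     (\<forall>t>t0. (x has_real_derivative
          (F (x t) (AU \<beta> \<delta> Vs Va \<mu> tmin tmax x t * Va t) - \<gamma> (x t) * x t)) (at t))"

definition solves_D :: "(real \<Rightarrow> real \<Rightarrow> real) \<Rightarrow> (real \<Rightarrow> real) \<Rightarrow> (real \<Rightarrow> real)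
   \<Rightarrow> real \<Rightarrow> real \<Rightarrow> real \<Rightarrow> (real \<Rightarrow> real) \<Rightarrow> (real \<Rightarrow> real) \<Rightarrow> (real \<Rightarrow> real)
   \<Rightarrow> real \<Rightarrow> (real \<Rightarrow> real) \<Rightarrow> (real \<Rightarrow> real) \<Rightarrow> (real \<Rightarrow> real) \<Rightarrow> bool" where
  "solves_D F \<gamma> \<mu> \<beta> \<delta> Vs Va tmin tmax t0 \<eta> x y \<longleftrightarrow>
     continuous_on UNIV x \<and> continuous_on {t0..} y \<and>
     (\<forall>s\<le>t0. x s = \<eta> s) \<and>
     (\<forall>t>t0.
        (x has_real_derivative (F (x t) (y t * Va t) - \<gamma> (x t) * x t)) (at t) \<and>
        (y has_real_derivative
          ((1 / (2 * \<delta>)) *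
             (\<beta> * x (t - tmin t) / hatV Va Vs (t - tmin t)
                * exp (- integral {t - tmin t .. t} (\<lambda>s. \<mu> (x s)))
                * (Va t / Va (t - tmin t))
            - \<beta> * x (t - tmax t) / hatV Va Vs (t - tmax t)
                * exp (- integral {t - tmax t .. t} (\<lambda>s. \<mu> (x s)))
                * (Va t / Va (t - tmax t)))
           - \<mu> (x t) * y t)) (at t))"

end

theory Submission
  imports Defs
begin

lemma antideriv:
  fixes f :: "real \<Rightarrow> real" assumes cf: "continuous_on UNIV f"
  obtains P where "\<And>t. (P has_real_derivative f t) (at t)"
proof -
  define P where "P t = integral {0..t} f - integral {t..0} f" for t
  have "(P has_real_derivative f t) (at t)" for t
  proof -
    define a where "a = -\<bar>t\<bar> - 1"
    define b where "b = \<bar>t\<bar> + 1"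
    have ab: "a < t" "t < b" "a < 0" "0 < b" unfolding a_def b_def by auto
    have int: "f integrable_on {a..b}"
      by (rule integrable_continuous_interval) (rule continuous_on_subset[OF cf], auto)
    have d1: "((\<lambda>s. integral {a..s} f) has_real_derivative f t) (at t)"
      using integral_has_real_derivative[of a b f t] continuous_on_subset[OF cf] ab
      by (simp add: at_within_Icc_at)
    have d2: "((\<lambda>s. integral {a..s} f - integral {a..0} f) has_real_derivative f t) (at t)"
      using d1 by (auto intro!: derivative_eq_intros)
    show ?thesis
    proof (rule has_field_derivative_transform_within_open[OF d2, of "{a<..<b}"])
      fix s assume s: "s \<in> {a<..<b}"
      show "integral {a..s} f - integral {a..0} f = P s"
      proof (cases "0 \<le> s")
        case True
        have "integral {a..0} f + integral {0..s} f = integral {a..s} f"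
          by (rule Henstock_Kurzweil_Integration.integral_combine) (use True ab s in \<open>auto intro: integrable_on_subinterval[OF int]\<close>)
        thus ?thesis using True unfolding P_def by (cases "s = 0") auto
      next
        case False
        have "integral {a..s} f + integral {s..0} f = integral {a..0} f"
          by (rule Henstock_Kurzweil_Integration.integral_combine) (use False ab s in \<open>auto intro: integrable_on_subinterval[OF int]\<close>)
        thus ?thesis using False unfolding P_def by auto
      qed
    qed (use ab in auto)
  qed
  thus ?thesis using that by blast
qed

lemma ftc_real:
  fixes P f :: "real \<Rightarrow> real"
  assumes "\<And>t. (P has_real_derivative f t) (at t)" "a \<le> b"
  shows "integral {a..b} f = P b - P a"
proof -
  have "(f has_integral (P b - P a)) {a..b}"
    by (rule fundamental_theorem_of_calculus[OF assms(2)])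
       (use assms(1) in \<open>auto simp: has_real_derivative_iff_has_vector_derivative[symmetric] intro: has_field_derivative_at_within\<close>)
  thus ?thesis by (rule integral_unique)
qed

lemma delay_deriv:
  fixes Va G u :: "real \<Rightarrow> real" and c Vmin :: real
  assumes G: "\<And>t. (G has_real_derivative Va t) (at t)"
  and Vlow: "\<And>t. Vmin \<le> Va t" and Vmin: "0 < Vmin"
  and eq: "\<And>t. G (u t) = G t - c"
  shows "(u has_real_derivative Va t / Va (u t)) (at t)"
proof -
  have Vp: "Va s > 0" for s using Vlow[of s] Vmin by linarith
  have mono: "G a < G b" if "a < b" for a b
    using DERIV_pos_imp_increasing[OF that] G Vp by blast
  have inj: "inj G"
    by (rule injI) (metis mono less_irrefl linorder_neqE_linordered_idom)
  have contG: "isCont G z" for z using G by (rule DERIV_isCont)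
  have lowb: "G z - G 0 \<ge> Vmin * z" if "z \<ge> 0" for z
  proof -
    have "(G z - Vmin * z) \<ge> (G 0 - Vmin * 0)"
      by (rule DERIV_nonneg_imp_nondecreasing[OF that])
         (use G Vlow in \<open>auto intro!: exI[of _ "Va _ - Vmin"] derivative_eq_intros\<close>)
    thus ?thesis by simp
  qed
  have upb: "G 0 - G z \<ge> Vmin * (- z)" if "z \<le> 0" for z
  proof -
    have "(G z - Vmin * z) \<le> (G 0 - Vmin * 0)"
      by (rule DERIV_nonneg_imp_nondecreasing[OF that])
         (use G Vlow in \<open>auto intro!: exI[of _ "Va _ - Vmin"] derivative_eq_intros\<close>)
    thus ?thesis by simp
  qed
  have surj: "\<exists>z. G z = y" for y
  proof (cases "G 0 \<le> y")
    case True
    define b where "b = (y - G 0) / Vmin"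
    have b0: "b \<ge> 0" using True Vmin unfolding b_def by simp
    have "G b \<ge> y" using lowb[OF b0] Vmin unfolding b_def by (simp add: field_simps)
    then show ?thesis using IVT[of G 0 y b] True b0 contG by blast
  next
    case False
    define b where "b = (y - G 0) / Vmin"
    have b0: "b \<le> 0" using False Vmin unfolding b_def by (simp add: divide_le_0_iff)
    have "G b \<le> y" using upb[OF b0] Vmin unfolding b_def by (simp add: field_simps)
    then show ?thesis using IVT[of G b y 0] False b0 contG by force
  qed
  define v where "v = inv G"
  have Gv: "G (v y) = y" for y unfolding v_def by (metis surj surj_f_inv_f surjI)
  have vG: "v (G z) = z" for z unfolding v_def using inj by (simp add: inv_f_f)
  have cv: "isCont v y" for y
  proof -
    have "isCont v (G (v y))"
      by (rule isCont_inverse_function[where d=1]) (auto simp: vG contG)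
    thus ?thesis by (simp add: Gv)
  qed
  have dv: "(v has_real_derivative inverse (Va (v y))) (at y)" for y
    by (rule DERIV_inverse_function[where a="y - 1" and b="y + 1"])
       (use G Vp cv Gv in \<open>auto simp: less_imp_neq[symmetric]\<close>)
  have ueq: "u = (\<lambda>t. v (G t - c))" using eq vG by (metis)
  have "((\<lambda>t. v (G t - c)) has_real_derivative inverse (Va (v (G t - c))) * Va t) (at t)"
    by (rule DERIV_chain2[OF dv]) (use G in \<open>auto intro!: derivative_eq_intros\<close>)
  thus ?thesis unfolding ueq by (simp add: field_simps)
qed

lemma AU_deriv:
  fixes \<mu> Va tmin tmax x :: "real \<Rightarrow> real" and \<beta> \<delta> Vs Vmin Vmax T t :: real
  assumes delta_pos: "\<delta> > 0" and Vs_pos: "Vs > 0"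
    and Vmin_pos: "0 < Vmin"
    and Va_bounds: "\<forall>t. Vmin \<le> Va t \<and> Va t \<le> Vmax"
    and Va_cont: "continuous_on UNIV Va"
    and mu_cont: "continuous_on UNIV \<mu>"
    and tmin_def: "\<forall>t. tmin t \<ge> 0 \<and> integral {t - tmin t .. t} Va = T - Vs * \<delta>"
    and tmax_def: "\<forall>t. tmax t \<ge> 0 \<and> integral {t - tmax t .. t} Va = T + Vs * \<delta>"
    and cx: "continuous_on UNIV x"
  shows "(AU \<beta> \<delta> Vs Va \<mu> tmin tmax x has_real_derivative
          ((1 / (2 * \<delta>)) *
             (\<beta> * x (t - tmin t) / hatV Va Vs (t - tmin t)
                * exp (- integral {t - tmin t .. t} (\<lambda>s. \<mu> (x s)))
                * (Va t / Va (t - tmin t))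
            - \<beta> * x (t - tmax t) / hatV Va Vs (t - tmax t)
                * exp (- integral {t - tmax t .. t} (\<lambda>s. \<mu> (x s)))
                * (Va t / Va (t - tmax t)))
           - \<mu> (x t) * AU \<beta> \<delta> Vs Va \<mu> tmin tmax x t)) (at t)"
proof -
  have Vp: "Va s > 0" for s using Va_bounds Vmin_pos by (meson less_le_trans)
  obtain G where G: "\<And>t. (G has_real_derivative Va t) (at t)"
    using antideriv[OF Va_cont] by blast
  have cmx: "continuous_on UNIV (\<lambda>s. \<mu> (x s))"
    by (rule continuous_on_compose2[OF mu_cont cx]) auto
  obtain M where M: "\<And>t. (M has_real_derivative \<mu> (x t)) (at t)"
    using antideriv[OF cmx] by blast
  have cM: "continuous_on UNIV M"
    by (rule continuous_at_imp_continuous_on) (use M DERIV_isCont in blast)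
  define g where "g s = \<beta> * x s / hatV Va Vs s" for s
  define k where "k s = g s * exp (M s)" for s
  have ck: "continuous_on UNIV k"
    unfolding k_def g_def hatV_def
    using Vp Vs_pos by (auto intro!: continuous_intros cx Va_cont cM simp: less_imp_neq[symmetric])
  obtain K where K: "\<And>t. (K has_real_derivative k t) (at t)"
    using antideriv[OF ck] by blast
  define u where "u t = t - tmin t" for t
  define w where "w t = t - tmax t" for t
  have Gu: "G (u t) = G t - (T - Vs * \<delta>)" for t
    using tmin_def ftc_real[OF G, of "u t" t] unfolding u_def by force
  have Gw: "G (w t) = G t - (T + Vs * \<delta>)" for t
    using tmax_def ftc_real[OF G, of "w t" t] unfolding w_def by force
  have du: "(u has_real_derivative Va t / Va (u t)) (at t)" for t
    by (rule delay_deriv[OF G _ Vmin_pos Gu]) (use Va_bounds in auto)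
  have dw: "(w has_real_derivative Va t / Va (w t)) (at t)" for t
    by (rule delay_deriv[OF G _ Vmin_pos Gw]) (use Va_bounds in auto)
  have tle: "tmin t \<le> tmax t" for t
  proof (rule ccontr)
    assume "\<not> tmin t \<le> tmax t"
    hence "u t \<le> w t" unfolding u_def w_def by simp
    hence "G (u t) \<le> G (w t)"
      by (rule DERIV_nonneg_imp_nondecreasing) (use G Vp in \<open>auto intro: less_imp_le\<close>)
    thus False using Gu[of t] Gw[of t] mult_pos_pos[OF Vs_pos delta_pos] by simp
  qed
  have Iint: "integral {s .. t} (\<lambda>s. \<mu> (x s)) = M t - M s" if "s \<le> t" for s t
    by (rule ftc_real[OF M that])
  have rep: "AU \<beta> \<delta> Vs Va \<mu> tmin tmax x t = (1 / (2 * \<delta>)) * (exp (- M t) * (K (u t) - K (w t)))" for t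
  proof -
    have "integral {tmin t .. tmax t}
       (\<lambda>\<phi>. \<beta> * x (t - \<phi>) / hatV Va Vs (t - \<phi>)
              * exp (- integral {t - \<phi> .. t} (\<lambda>s. \<mu> (x s))))
        = integral {tmin t .. tmax t} (\<lambda>\<phi>. exp (- M t) * k (t - \<phi>))"
    proof (rule integral_cong)
      fix \<phi> assume "\<phi> \<in> {tmin t .. tmax t}"
      hence "\<phi> \<ge> 0" using tmin_def[rule_format, of t] by auto
      hence "integral {t - \<phi> .. t} (\<lambda>s. \<mu> (x s)) = M t - M (t - \<phi>)" by (simp add: Iint)
      thus "\<beta> * x (t - \<phi>) / hatV Va Vs (t - \<phi>)
              * exp (- integral {t - \<phi> .. t} (\<lambda>s. \<mu> (x s))) = exp (- M t) * k (t - \<phi>)"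
        unfolding k_def g_def by (simp add: exp_add[symmetric])
    qed
    also have "\<dots> = exp (- M t) * integral {tmin t .. tmax t} (\<lambda>\<phi>. k (t - \<phi>))"
      by simp
    also have "integral {tmin t .. tmax t} (\<lambda>\<phi>. k (t - \<phi>)) = (- K (t - tmax t)) - (- K (t - tmin t))"
    proof (rule ftc_real[OF _ tle])
      fix p
      have "((\<lambda>z. K (t - z)) has_real_derivative k (t - p) * (-1)) (at p)"
        by (rule DERIV_chain2[OF K]) (auto intro!: derivative_eq_intros)
      from DERIV_minus[OF this]
      show "((\<lambda>z. - K (t - z)) has_real_derivative k (t - p)) (at p)" by simp
    qed
    finally show ?thesis unfolding AU_def u_def w_def by simp
  qed
  have AUeq: "AU \<beta> \<delta> Vs Va \<mu> tmin tmax x = (\<lambda>t. (1 / (2 * \<delta>)) * (exp (- M t) * (K (u t) - K (w t))))"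
    using rep by auto
  have ex: "exp (- (M t - M s)) = exp (- M t) * exp (M s)" for s
    by (simp add: exp_add[symmetric])
  have dKu: "((\<lambda>t. K (u t)) has_real_derivative k (u t) * (Va t / Va (u t))) (at t)"
    by (rule DERIV_chain2[OF K du])
  have dKw: "((\<lambda>t. K (w t)) has_real_derivative k (w t) * (Va t / Va (w t))) (at t)"
    by (rule DERIV_chain2[OF K dw])
  have dE: "((\<lambda>t. exp (- M t)) has_real_derivative exp (- M t) * (- \<mu> (x t))) (at t)"
    by (rule DERIV_chain2[OF DERIV_exp]) (use M in \<open>auto intro!: derivative_eq_intros\<close>)
  have dAU: "((\<lambda>t. (1 / (2 * \<delta>)) * (exp (- M t) * (K (u t) - K (w t)))) has_real_derivative
     (1 / (2 * \<delta>)) * (exp (- M t) * (- \<mu> (x t)) * (K (u t) - K (w t))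
        + exp (- M t) * (k (u t) * (Va t / Va (u t)) - k (w t) * (Va t / Va (w t))))) (at t)"
    by (intro DERIV_cmult DERIV_cong[OF DERIV_mult[OF dE DERIV_diff[OF dKu dKw]]])
       (simp add: algebra_simps)
  show ?thesis
    unfolding AUeq
  proof (rule DERIV_cong[OF dAU])
    have i1: "integral {u t .. t} (\<lambda>s. \<mu> (x s)) = M t - M (u t)"
      using Iint tmin_def unfolding u_def by force
    have i2: "integral {w t .. t} (\<lambda>s. \<mu> (x s)) = M t - M (w t)"
      using Iint tmax_def unfolding w_def by force
    show "(1 / (2 * \<delta>)) * (exp (- M t) * (- \<mu> (x t)) * (K (u t) - K (w t))
        + exp (- M t) * (k (u t) * (Va t / Va (u t)) - k (w t) * (Va t / Va (w t)))) =
      (1 / (2 * \<delta>)) *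
             (\<beta> * x (t - tmin t) / hatV Va Vs (t - tmin t)
                * exp (- integral {t - tmin t .. t} (\<lambda>s. \<mu> (x s)))
                * (Va t / Va (t - tmin t))
            - \<beta> * x (t - tmax t) / hatV Va Vs (t - tmax t)
                * exp (- integral {t - tmax t .. t} (\<lambda>s. \<mu> (x s)))
                * (Va t / Va (t - tmax t)))
           - \<mu> (x t) * ((1 / (2 * \<delta>)) * (exp (- M t) * (K (u t) - K (w t))))"
      unfolding u_def[symmetric] w_def[symmetric] g_def[symmetric] i1 i2 ex k_def
      by (simp add: algebra_simps)
  qed
qed

theorem theorem4p2:
  fixes F :: "real \<Rightarrow> real \<Rightarrow> real" and \<gamma> \<mu> Va tmin tmax :: "real \<Rightarrow> real"
    and \<beta> \<delta> Vs Vmin Vmax T t0 :: real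
  assumes beta_pos: "\<beta> > 0" and delta_pos: "\<delta> > 0" and Vs_pos: "Vs > 0"
    and Vmin_pos: "0 < Vmin"
    and Va_bounds: "\<forall>t. Vmin \<le> Va t \<and> Va t \<le> Vmax"
    and Va_cont: "continuous_on UNIV Va"
    and T_gt: "T > Vs * \<delta>"
    and mu_cont: "continuous_on UNIV \<mu>"
    and tmin_def: "\<forall>t. tmin t \<ge> 0 \<and> integral {t - tmin t .. t} Va = T - Vs * \<delta>"
    and tmax_def: "\<forall>t. tmax t \<ge> 0 \<and> integral {t - tmax t .. t} Va = T + Vs * \<delta>"
  shows
    "(\<forall>\<rho> x. solves_U F \<gamma> \<mu> \<beta> \<delta> Vs Va tmin tmax t0 \<rho> x \<longrightarrow>
        solves_D F \<gamma> \<mu> \<beta> \<delta> Vs Va tmin tmax t0 \<rho> x (AU \<beta> \<delta> Vs Va \<mu> tmin tmax x) \<and>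
        AU \<beta> \<delta> Vs Va \<mu> tmin tmax x t0 =
          (1 / (2 * \<delta>)) * integral {tmin t0 .. tmax t0}
            (\<lambda>\<phi>. \<beta> * \<rho> (t0 - \<phi>) / hatV Va Vs (t0 - \<phi>)
                   * exp (- integral {t0 - \<phi> .. t0} (\<lambda>s. \<mu> (\<rho> s))))) \<and>
     (\<forall>\<eta> x y. solves_D F \<gamma> \<mu> \<beta> \<delta> Vs Va tmin tmax t0 \<eta> x y \<longrightarrow>
        ((solves_U F \<gamma> \<mu> \<beta> \<delta> Vs Va tmin tmax t0 \<eta> x \<and>
          (\<forall>t\<ge>t0. y t = AU \<beta> \<delta> Vs Va \<mu> tmin tmax x t))
         \<longleftrightarrow>
         y t0 = (1 / (2 * \<delta>)) * integral {tmin t0 .. tmax t0}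
            (\<lambda>\<phi>. \<beta> * \<eta> (t0 - \<phi>) / hatV Va Vs (t0 - \<phi>)
                   * exp (- integral {t0 - \<phi> .. t0} (\<lambda>s. \<mu> (\<eta> s))))))"
proof -
  note AUd = AU_deriv[OF delta_pos Vs_pos Vmin_pos Va_bounds Va_cont mu_cont tmin_def tmax_def]
  have hist: "AU \<beta> \<delta> Vs Va \<mu> tmin tmax x t0 = AU \<beta> \<delta> Vs Va \<mu> tmin tmax \<rho> t0"
    if h: "\<forall>s\<le>t0. x s = \<rho> s" for x \<rho>
    unfolding AU_def
  proof (intro arg_cong[where f="\<lambda>z. (1 / (2 * \<delta>)) * z"] integral_cong)
    fix \<phi> assume "\<phi> \<in> {tmin t0 .. tmax t0}"
    hence p0: "\<phi> \<ge> 0" using tmin_def[rule_format, of t0] by auto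
    have "integral {t0 - \<phi> .. t0} (\<lambda>s. \<mu> (x s)) = integral {t0 - \<phi> .. t0} (\<lambda>s. \<mu> (\<rho> s))"
      by (rule integral_cong) (use h in auto)
    thus "\<beta> * x (t0 - \<phi>) / hatV Va Vs (t0 - \<phi>) * exp (- integral {t0 - \<phi>..t0} (\<lambda>s. \<mu> (x s))) =
          \<beta> * \<rho> (t0 - \<phi>) / hatV Va Vs (t0 - \<phi>) * exp (- integral {t0 - \<phi>..t0} (\<lambda>s. \<mu> (\<rho> s)))"
      using h p0 by simp
  qed
  have AUcont: "continuous_on S (AU \<beta> \<delta> Vs Va \<mu> tmin tmax x)" if "continuous_on UNIV x" for x S
    by (rule continuous_at_imp_continuous_on) (use AUd[OF that] DERIV_isCont in blast)
  show ?thesis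
  proof (intro conjI allI impI)
    fix \<rho> x assume U: "solves_U F \<gamma> \<mu> \<beta> \<delta> Vs Va tmin tmax t0 \<rho> x"
    hence cx: "continuous_on UNIV x" and hx: "\<forall>s\<le>t0. x s = \<rho> s" unfolding solves_U_def by auto
    show "solves_D F \<gamma> \<mu> \<beta> \<delta> Vs Va tmin tmax t0 \<rho> x (AU \<beta> \<delta> Vs Va \<mu> tmin tmax x)"
      using U AUd[OF cx] AUcont[OF cx] unfolding solves_U_def solves_D_def by blast
    show "AU \<beta> \<delta> Vs Va \<mu> tmin tmax x t0 =
          (1 / (2 * \<delta>)) * integral {tmin t0 .. tmax t0}
            (\<lambda>\<phi>. \<beta> * \<rho> (t0 - \<phi>) / hatV Va Vs (t0 - \<phi>)
                   * exp (- integral {t0 - \<phi> .. t0} (\<lambda>s. \<mu> (\<rho> s))))"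
      using hist[OF hx] unfolding AU_def by simp
  next
    fix \<eta> x y assume D: "solves_D F \<gamma> \<mu> \<beta> \<delta> Vs Va tmin tmax t0 \<eta> x y"
    hence cx: "continuous_on UNIV x" and hx: "\<forall>s\<le>t0. x s = \<eta> s"
      and cy: "continuous_on {t0..} y" unfolding solves_D_def by auto
    have h0: "AU \<beta> \<delta> Vs Va \<mu> tmin tmax x t0 = (1 / (2 * \<delta>)) * integral {tmin t0 .. tmax t0}
            (\<lambda>\<phi>. \<beta> * \<eta> (t0 - \<phi>) / hatV Va Vs (t0 - \<phi>)
                   * exp (- integral {t0 - \<phi> .. t0} (\<lambda>s. \<mu> (\<eta> s))))"
      using hist[OF hx] unfolding AU_def by simp
    show "(solves_U F \<gamma> \<mu> \<beta> \<delta> Vs Va tmin tmax t0 \<eta> x \<and>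
          (\<forall>t\<ge>t0. y t = AU \<beta> \<delta> Vs Va \<mu> tmin tmax x t))
         \<longleftrightarrow>
         y t0 = (1 / (2 * \<delta>)) * integral {tmin t0 .. tmax t0}
            (\<lambda>\<phi>. \<beta> * \<eta> (t0 - \<phi>) / hatV Va Vs (t0 - \<phi>)
                   * exp (- integral {t0 - \<phi> .. t0} (\<lambda>s. \<mu> (\<eta> s))))"
    proof
      assume "solves_U F \<gamma> \<mu> \<beta> \<delta> Vs Va tmin tmax t0 \<eta> x \<and>
          (\<forall>t\<ge>t0. y t = AU \<beta> \<delta> Vs Va \<mu> tmin tmax x t)"
      thus "y t0 = (1 / (2 * \<delta>)) * integral {tmin t0 .. tmax t0}
            (\<lambda>\<phi>. \<beta> * \<eta> (t0 - \<phi>) / hatV Va Vs (t0 - \<phi>)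
                   * exp (- integral {t0 - \<phi> .. t0} (\<lambda>s. \<mu> (\<eta> s))))" using h0 by simp
    next
      assume y0: "y t0 = (1 / (2 * \<delta>)) * integral {tmin t0 .. tmax t0}
            (\<lambda>\<phi>. \<beta> * \<eta> (t0 - \<phi>) / hatV Va Vs (t0 - \<phi>)
                   * exp (- integral {t0 - \<phi> .. t0} (\<lambda>s. \<mu> (\<eta> s))))"
      define A where "A = AU \<beta> \<delta> Vs Va \<mu> tmin tmax x"
      have A0: "y t0 = A t0" using y0 h0 unfolding A_def by simp
      have cmx: "continuous_on UNIV (\<lambda>s. \<mu> (x s))"
        by (rule continuous_on_compose2[OF mu_cont cx]) auto
      obtain M where M: "\<And>t. (M has_real_derivative \<mu> (x t)) (at t)"
        using antideriv[OF cmx] by blast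
      define z where "z t = (y t - A t) * exp (M t)" for t
      have dz: "(z has_real_derivative 0) (at t)" if "t > t0" for t
      proof -
        have dy: "(y has_real_derivative
          ((1 / (2 * \<delta>)) *
             (\<beta> * x (t - tmin t) / hatV Va Vs (t - tmin t)
                * exp (- integral {t - tmin t .. t} (\<lambda>s. \<mu> (x s)))
                * (Va t / Va (t - tmin t))
            - \<beta> * x (t - tmax t) / hatV Va Vs (t - tmax t)
                * exp (- integral {t - tmax t .. t} (\<lambda>s. \<mu> (x s)))
                * (Va t / Va (t - tmax t)))
           - \<mu> (x t) * y t)) (at t)"
          using D that unfolding solves_D_def by blast
        have dA: "(A has_real_derivative
          ((1 / (2 * \<delta>)) *
             (\<beta> * x (t - tmin t) / hatV Va Vs (t - tmin t)
                * exp (- integral {t - tmin t .. t} (\<lambda>s. \<mu> (x s)))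
                * (Va t / Va (t - tmin t))
            - \<beta> * x (t - tmax t) / hatV Va Vs (t - tmax t)
                * exp (- integral {t - tmax t .. t} (\<lambda>s. \<mu> (x s)))
                * (Va t / Va (t - tmax t)))
           - \<mu> (x t) * A t)) (at t)"
          unfolding A_def by (rule AUd[OF cx])
        have "(z has_real_derivative
               (- \<mu> (x t) * y t + \<mu> (x t) * A t) * exp (M t) + (exp (M t) * \<mu> (x t)) * (y t - A t)) (at t)"
          unfolding z_def
          by (rule DERIV_cong[OF DERIV_mult[OF DERIV_diff[OF dy dA] DERIV_chain2[OF DERIV_exp M]]])
             (simp add: algebra_simps)
        thus ?thesis by (simp add: algebra_simps)
      qed
      have cz: "continuous_on {t0..} z"
        unfolding z_def
        by (intro continuous_intros cy AUcont[OF cx, unfolded A_def[symmetric]]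
              continuous_on_exp continuous_at_imp_continuous_on)
           (use M DERIV_isCont in blast)
      have yA: "y t = A t" if "t \<ge> t0" for t
      proof (cases "t = t0")
        case True thus ?thesis using A0 by simp
      next
        case False
        hence lt: "t0 < t" using that by simp
        obtain l \<xi> where xi: "t0 < \<xi>" "\<xi> < t" "(z has_real_derivative l) (at \<xi>)"
          and eqz: "z t - z t0 = (t - t0) * l"
          using MVT[OF lt continuous_on_subset[OF cz] ] dz
          by (metis atLeastAtMost_iff atLeast_iff real_differentiable_def subsetI)
        have "l = 0" using DERIV_unique[OF xi(3) dz[OF xi(1)]] .
        hence "z t = z t0" using eqz by simp
        also have "z t0 = 0" unfolding z_def using A0 by simp
        finally show ?thesis unfolding z_def by simp
      qed
      show "solves_U F \<gamma> \<mu> \<beta> \<delta> Vs Va tmin tmax t0 \<eta> x \<and>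
          (\<forall>t\<ge>t0. y t = AU \<beta> \<delta> Vs Va \<mu> tmin tmax x t)"
        using D yA unfolding solves_D_def solves_U_def A_def by auto
    qed
  qed
qed

end
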